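(* For every $n\ge 2$ the Jones–Wenzl projectors in $\mathcal{TL}_0(\Bbbk)$ satisfy $$\mathrm{j}_n=(\mathrm{j}_{n-1}\otimes\mathrm{id}_{\mathbf 1})-(\mathrm{j}_{n-1}\otimes\mathrm{id}_{\mathbf 1})\circ(\mathrm{id}_{\mathbf{n-2}}\otimes\mathrm{cup})\circ(\mathrm{id}_{\mathbf{n-2}}\otimes\mathrm{cap})\circ(\mathrm{j}_{n-1}\otimes\mathrm{id}_{\mathbf 1}).$$
   Context: $\Bbbk$ is a field. $\mathcal{TL}_0(\Bbbk)$ is the strict $\Bbbk$-linear monoidal category with objects $\mathbf 0,\mathbf 1,\dots$, $\mathbf m\otimes\mathbf n=\mathbf{m+n}$, generated by $\mathrm{cup}:\mathbf 0\to\mathbf 2$ and $\mathrm{cap}:\mathbf 2\to\mathbf 0$ subject to $(\mathrm{id}_{\mathbf 1}\otimes\mathrm{cap})\circ(\mathrm{cup}\otimes\mathrm{id}_{\mathbf 1})=0=(\mathrm{cap}\otimes\mathrm{id}_{\mathbf 1})\circ(\mathrm{id}_{\mathbf 1}\otimes\mathrm{cup})$ and $\mathrm{cap}\circ\mathrm{cup}=\mathrm{id}_{\mathbf 0}$. A subset $I\subseteq\{1,\dots,n\}$ is apt if $n\notin I$ and no two elements of $I$ are consecutive; $\mathrm{cap}_{I,n}:\mathbf n\to\mathbf{n-2|I|}$ has caps joining strands $i,i+1$ for $i\in I$ and through-strands elsewhere, $\mathrm{cup}_{I,n}$ is its vertical reflection, and $\mathrm{j}_n=\sum_{I\text{ apt}}(-1)^{|I|}\mathrm{cup}_{I,n}\circ\mathrm{cap}_{I,n}\in\mathrm{End}(\mathbf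 n)$. *)

theory Defs
  imports Main
begin

text \<open>
  A strict k-linear monoidal category whose objects are the natural numbers
  (object m tensor object n = m + n), equipped with morphisms cup : 0 -> 2 and
  cap : 2 -> 0 satisfying the defining relations of TL_0(k).
  Morphisms of all hom-spaces live in one type 'm, with source src and target tgt.
  comp g f is the composite g after f (defined when src g = tgt f);
  tens is the (strict) tensor product; idm n is the identity of object n;
  add, smul, zer give each hom-space Hom(m,n) its k-vector-space structure.
  TL_0(k) is the free such structure, so an identity between morphisms built
  from cup and cap holds in TL_0(k) iff it holds in every such structure.
\<close>

locale tl0_category =
  fixes src :: "'m \<Rightarrow> nat" and tgt :: "'m \<Rightarrow> nat"
    and comp :: "'m \<Rightarrow> 'm \<Rightarrow> 'm"
    and tens :: "'m \<Rightarrow> 'm \<Rightarrow> 'm"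
    and idm :: "nat \<Rightarrow> 'm"
    and add :: "'m \<Rightarrow> 'm \<Rightarrow> 'm"
    and smul :: "'k::field \<Rightarrow> 'm \<Rightarrow> 'm"
    and zer :: "nat \<Rightarrow> nat \<Rightarrow> 'm"
    and cup :: 'm and cap :: 'm
  assumes id_src: "src (idm n) = n" and id_tgt: "tgt (idm n) = n"
    and comp_src: "src g = tgt f \<Longrightarrow> src (comp g f) = src f"
    and comp_tgt: "src g = tgt f \<Longrightarrow> tgt (comp g f) = tgt g"
    and comp_assoc: "src h = tgt g \<Longrightarrow> src g = tgt f \<Longrightarrow> comp h (comp g f) = comp (comp h g) f"
    and comp_id_left: "comp (idm (tgt f)) f = f"
    and comp_id_right: "comp f (idm (src f)) = f"
    and tens_src: "src (tens f g) = src f + src g"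
    and tens_tgt: "tgt (tens f g) = tgt f + tgt g"
    and tens_assoc: "tens f (tens g h) = tens (tens f g) h"
    and tens_unit_left: "tens (idm 0) f = f"
    and tens_unit_right: "tens f (idm 0) = f"
    and tens_id: "tens (idm m) (idm n) = idm (m + n)"
    and interchange: "src g1 = tgt f1 \<Longrightarrow> src g2 = tgt f2 \<Longrightarrow>
         comp (tens g1 g2) (tens f1 f2) = tens (comp g1 f1) (comp g2 f2)"
    and add_src: "src f = src g \<Longrightarrow> tgt f = tgt g \<Longrightarrow> src (add f g) = src f"
    and add_tgt: "src f = src g \<Longrightarrow> tgt f = tgt g \<Longrightarrow> tgt (add f g) = tgt f"
    and smul_src: "src (smul c f) = src f"
    and smul_tgt: "tgt (smul c f) = tgt f"
    and zer_src: "src (zer m n) = m"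
    and zer_tgt: "tgt (zer m n) = n"
    and add_assoc: "src f = src g \<Longrightarrow> tgt f = tgt g \<Longrightarrow> src g = src h \<Longrightarrow> tgt g = tgt h \<Longrightarrow>
         add f (add g h) = add (add f g) h"
    and add_comm: "src f = src g \<Longrightarrow> tgt f = tgt g \<Longrightarrow> add f g = add g f"
    and add_zero: "add f (zer (src f) (tgt f)) = f"
    and add_neg: "add f (smul (-1) f) = zer (src f) (tgt f)"
    and smul_one: "smul 1 f = f"
    and smul_smul: "smul a (smul b f) = smul (a * b) f"
    and smul_add_scalar: "smul (a + b) f = add (smul a f) (smul b f)"
    and smul_add: "src f = src g \<Longrightarrow> tgt f = tgt g \<Longrightarrow> smul a (add f g) = add (smul a f) (smul a g)"
    and comp_add_left: "src g = tgt f \<Longrightarrow> src g' = tgt f \<Longrightarrow> tgt g = tgt g' \<Longrightarrow>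
         comp (add g g') f = add (comp g f) (comp g' f)"
    and comp_add_right: "src g = tgt f \<Longrightarrow> src g = tgt f' \<Longrightarrow> src f = src f' \<Longrightarrow>
         comp g (add f f') = add (comp g f) (comp g f')"
    and comp_smul_left: "src g = tgt f \<Longrightarrow> comp (smul c g) f = smul c (comp g f)"
    and comp_smul_right: "src g = tgt f \<Longrightarrow> comp g (smul c f) = smul c (comp g f)"
    and tens_add_left: "src g = src g' \<Longrightarrow> tgt g = tgt g' \<Longrightarrow>
         tens (add g g') f = add (tens g f) (tens g' f)"
    and tens_add_right: "src f = src f' \<Longrightarrow> tgt f = tgt f' \<Longrightarrow>
         tens g (add f f') = add (tens g f) (tens g f')"
    and tens_smul_left: "tens (smul c g) f = smul c (tens g f)"
    and tens_smul_right: "tens g (smul c f) = smul c (tens g f)"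
    and cup_src: "src cup = 0" and cup_tgt: "tgt cup = 2"
    and cap_src: "src cap = 2" and cap_tgt: "tgt cap = 0"
    and zigzag1: "comp (tens (idm 1) cap) (tens cup (idm 1)) = zer 1 1"
    and zigzag2: "comp (tens cap (idm 1)) (tens (idm 1) cup) = zer 1 1"
    and circle: "comp cap cup = idm 0"

definition apt :: "nat \<Rightarrow> nat set \<Rightarrow> bool" where
  "apt n I \<longleftrightarrow> I \<subseteq> {1..n} \<and> n \<notin> I \<and> (\<forall>i\<in>I. Suc i \<notin> I)"

context tl0_category
begin

text \<open>capw I k r: the diagram on the r strands at positions k, k+1, ..., k+r-1,
  with a cap on strands i, i+1 for i in I and through-strands elsewhere.\<close>
fun capw :: "nat set \<Rightarrow> nat \<Rightarrow> nat \<Rightarrow> 'm" where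
  "capw I k 0 = idm 0"
| "capw I k (Suc 0) = idm 1"
| "capw I k (Suc (Suc r)) =
     (if k \<in> I then tens cap (capw I (k + 2) r) else tens (idm 1) (capw I (Suc k) (Suc r)))"

fun cupw :: "nat set \<Rightarrow> nat \<Rightarrow> nat \<Rightarrow> 'm" where
  "cupw I k 0 = idm 0"
| "cupw I k (Suc 0) = idm 1"
| "cupw I k (Suc (Suc r)) =
     (if k \<in> I then tens cup (cupw I (k + 2) r) else tens (idm 1) (cupw I (Suc k) (Suc r)))"

definition cap_I :: "nat set \<Rightarrow> nat \<Rightarrow> 'm" where "cap_I I n = capw I 1 n"
definition cup_I :: "nat set \<Rightarrow> nat \<Rightarrow> 'm" where "cup_I I n = cupw I 1 n"

definition hsum :: "nat \<Rightarrow> nat \<Rightarrow> 'm list \<Rightarrow> 'm" where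
  "hsum m n fs = foldr add fs (zer m n)"

definition msub :: "'m \<Rightarrow> 'm \<Rightarrow> 'm" where "msub f g = add f (smul (-1) g)"

definition apt_sets :: "nat \<Rightarrow> nat set list" where
  "apt_sets n = filter (apt n) (map set (subseqs [1..<Suc n]))"

definition jw :: "nat \<Rightarrow> 'm" where
  "jw n = hsum n n (map (\<lambda>I. smul ((-1) ^ card I) (comp (cup_I I n) (cap_I I n))) (apt_sets n))"

end

end

theory Submission
  imports Defs "HOL-Library.Multiset"
begin


fun AL :: "nat \<Rightarrow> nat \<Rightarrow> nat set list" where
  "AL k 0 = [{}]"
| "AL k (Suc 0) = [{}]"
| "AL k (Suc (Suc r)) = AL (Suc k) (Suc r) @ map (insert k) (AL (k + 2) r)"

lemma AL_set: "set (AL k r) = {I. I \<subseteq> {k..<k + (r - 1)} \<and> (\<forall>i\<in>I. Suc i \<notin> I)}"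
proof (induction k r rule: AL.induct)
  case (3 k r)
  show ?case
  proof (rule set_eqI, rule iffI)
    fix I assume "I \<in> set (AL k (Suc (Suc r)))"
    then consider "I \<in> set (AL (Suc k) (Suc r))" | J where "J \<in> set (AL (k+2) r)" "I = insert k J"
      by auto
    then show "I \<in> {I. I \<subseteq> {k..<k + (Suc (Suc r) - 1)} \<and> (\<forall>i\<in>I. Suc i \<notin> I)}"
    proof cases
      case 1
      then have "I \<subseteq> {Suc k..<Suc k + r}" "\<forall>i\<in>I. Suc i \<notin> I" using 3(1) by auto
      then show ?thesis by auto
    next
      case 2
      then have J: "J \<subseteq> {k + 2..<k + 2 + (r - 1)}" "\<forall>i\<in>J. Suc i \<notin> J" using 3(2) by auto
      have "I \<subseteq> {k..<k + Suc r}"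
      proof
        fix i assume "i \<in> I"
        then have "i = k \<or> (k + 2 \<le> i \<and> i < k + 2 + (r - 1))" using J 2 by auto
        then show "i \<in> {k..<k + Suc r}" by auto
      qed
      moreover have "\<forall>i\<in>I. Suc i \<notin> I"
      proof
        fix i assume i: "i \<in> I"
        have "Suc k \<notin> J" "k \<notin> J" using J(1) by auto
        moreover have "Suc i \<noteq> k" if "i \<in> J" using that J(1) by auto
        ultimately show "Suc i \<notin> I" using i J(2) 2(2) by auto
      qed
      ultimately show ?thesis by simp
    qed
  next
    fix I assume I: "I \<in> {I. I \<subseteq> {k..<k + (Suc (Suc r) - 1)} \<and> (\<forall>i\<in>I. Suc i \<notin> I)}"
    then have Isub: "I \<subseteq> {k..<k + Suc r}" and Inc: "\<forall>i\<in>I. Suc i \<notin> I" by auto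
    show "I \<in> set (AL k (Suc (Suc r)))"
    proof (cases "k \<in> I")
      case False
      have "I \<subseteq> {Suc k..<Suc k + (Suc r - 1)}"
      proof
        fix i assume "i \<in> I" then have "k \<le> i" "i < k + Suc r" "i \<noteq> k" using Isub False by auto
        then show "i \<in> {Suc k..<Suc k + (Suc r - 1)}" by simp
      qed
      then show ?thesis using Inc 3 by simp
    next
      case True
      have "I - {k} \<subseteq> {k + 2..<k + 2 + (r - 1)}"
      proof
        fix i assume "i \<in> I - {k}" then have "k \<le> i" "i < k + Suc r" "i \<noteq> k" "i \<noteq> Suc k"
          using Isub Inc True by auto
        then show "i \<in> {k + 2..<k + 2 + (r - 1)}" by simp
      qed
      then have "I - {k} \<in> set (AL (k+2) r)" using 3 Inc by auto
      then show ?thesis using True by (auto intro!: image_eqI[of _ _ "I - {k}"])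
    qed
  qed
qed auto

lemma AL_distinct: "distinct (AL k r)"
proof (induction k r rule: AL.induct)
  case (3 k r)
  have n2: "k \<notin> J" if "J \<in> set (AL (k+2) r)" for J using that AL_set by auto
  have n1: "k \<notin> J" if "J \<in> set (AL (Suc k) (Suc r))" for J using that AL_set by auto
  have inj: "inj_on (insert k) (set (AL (k+2) r))"
  proof (rule inj_onI)
    fix x y assume "x \<in> set (AL (k+2) r)" "y \<in> set (AL (k+2) r)" "insert k x = insert k y"
    then have "insert k x - {k} = insert k y - {k}" "k \<notin> x" "k \<notin> y" using n2 by auto
    then show "x = y" by simp
  qed
  have disj: "set (AL (Suc k) (Suc r)) \<inter> insert k ` set (AL (k+2) r) = {}" using n1 by auto
  show ?case using 3 inj disj by (simp add: distinct_map)
qed auto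

lemma AL_finite: "I \<in> set (AL k r) \<Longrightarrow> finite I"
proof -
  assume "I \<in> set (AL k r)"
  then have "I \<subseteq> {k..<k + (r - 1)}" by (simp add: AL_set)
  then show "finite I" by (rule finite_subset) simp
qed




context tl0_category
begin

lemma U_src: "src (comp cup cap) = 2" using comp_src cup_src cap_src cap_tgt by simp
lemma U_tgt: "tgt (comp cup cap) = 2" using comp_tgt cup_src cup_tgt cap_tgt by simp

lemma zer_self: "add (zer a b) (smul (-1) (zer a b)) = zer a b"
  using add_neg[of "zer a b"] by (simp add: zer_src zer_tgt)

lemma comp_zer_right: "src g = b \<Longrightarrow> comp g (zer a b) = zer a (tgt g)"
proof -
  assume h: "src g = b"
  let ?z = "zer a b"
  have "comp g ?z = comp g (add ?z (smul (-1) ?z))" by (simp add: zer_self)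
  also have "\<dots> = add (comp g ?z) (comp g (smul (-1) ?z))"
    by (rule comp_add_right) (simp_all add: h zer_src zer_tgt smul_src smul_tgt)
  also have "\<dots> = add (comp g ?z) (smul (-1) (comp g ?z))"
    by (simp add: comp_smul_right h zer_tgt)
  also have "\<dots> = zer a (tgt g)" by (simp add: add_neg comp_src comp_tgt h zer_src zer_tgt)
  finally show ?thesis .
qed

lemma comp_zer_left: "tgt f = a \<Longrightarrow> comp (zer a b) f = zer (src f) b"
proof -
  assume h: "tgt f = a"
  let ?z = "zer a b"
  have "comp ?z f = comp (add ?z (smul (-1) ?z)) f" by (simp add: zer_self)
  also have "\<dots> = add (comp ?z f) (comp (smul (-1) ?z) f)"
    by (rule comp_add_left) (simp_all add: h zer_src zer_tgt smul_src smul_tgt)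
  also have "\<dots> = add (comp ?z f) (smul (-1) (comp ?z f))"
    by (simp add: comp_smul_left h zer_src)
  also have "\<dots> = zer (src f) b" by (simp add: add_neg comp_src comp_tgt h zer_src zer_tgt)
  finally show ?thesis .
qed

lemma tens_zer_right: "tens g (zer a b) = zer (src g + a) (tgt g + b)"
proof -
  let ?z = "zer a b"
  have "tens g ?z = tens g (add ?z (smul (-1) ?z))" by (simp add: zer_self)
  also have "\<dots> = add (tens g ?z) (tens g (smul (-1) ?z))"
    by (rule tens_add_right) (simp_all add: zer_src zer_tgt smul_src smul_tgt)
  also have "\<dots> = add (tens g ?z) (smul (-1) (tens g ?z))"
    by (simp add: tens_smul_right)
  also have "\<dots> = zer (src g + a) (tgt g + b)" by (simp add: add_neg tens_src tens_tgt zer_src zer_tgt)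
  finally show ?thesis .
qed

lemma tens_zer_left: "tens (zer a b) g = zer (a + src g) (b + tgt g)"
proof -
  let ?z = "zer a b"
  have "tens ?z g = tens (add ?z (smul (-1) ?z)) g" by (simp add: zer_self)
  also have "\<dots> = add (tens ?z g) (tens (smul (-1) ?z) g)"
    by (rule tens_add_left) (simp_all add: zer_src zer_tgt smul_src smul_tgt)
  also have "\<dots> = add (tens ?z g) (smul (-1) (tens ?z g))"
    by (simp add: tens_smul_left)
  also have "\<dots> = zer (a + src g) (b + tgt g)" by (simp add: add_neg tens_src tens_tgt zer_src zer_tgt)
  finally show ?thesis .
qed

lemma smul_zero: "smul 0 f = zer (src f) (tgt f)"
proof -
  let ?x = "smul 0 f"
  have xx: "add ?x ?x = ?x" using smul_add_scalar[of 0 0 f] by simp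
  have "zer (src f) (tgt f) = add ?x (smul (-1) ?x)" using add_neg[of ?x] by (simp add: smul_src smul_tgt)
  also have "\<dots> = add (add ?x ?x) (smul (-1) ?x)" by (simp add: xx)
  also have "\<dots> = add ?x (add ?x (smul (-1) ?x))" by (rule add_assoc[symmetric]) (simp_all add: smul_src smul_tgt)
  also have "\<dots> = ?x" using add_neg[of ?x] add_zero[of ?x] by simp
  finally show ?thesis by simp
qed

lemma smul_zer: "smul c (zer a b) = zer a b"
proof -
  have "zer a b = smul 0 (zer a b)" using smul_zero[of "zer a b"] by (simp add: zer_src zer_tgt)
  then have "smul c (zer a b) = smul c (smul 0 (zer a b))" by simp
  also have "\<dots> = smul 0 (zer a b)" by (simp add: smul_smul)
  finally show ?thesis using smul_zero[of "zer a b"] by (simp add: zer_src zer_tgt)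
qed

lemma add_zer_left: "src f = a \<Longrightarrow> tgt f = b \<Longrightarrow> add (zer a b) f = f"
  using add_comm[of "zer a b" f] add_zero[of f] by (simp add: zer_src zer_tgt)

definition hom :: "'m \<Rightarrow> nat \<Rightarrow> nat \<Rightarrow> bool" where "hom f m n \<longleftrightarrow> src f = m \<and> tgt f = n"

lemma msub_src: "hom f m n \<Longrightarrow> hom g m n \<Longrightarrow> hom (msub f g) m n"
  by (simp add: hom_def msub_def add_src add_tgt smul_src smul_tgt)

lemma comp_msub_left: "hom g a b \<Longrightarrow> hom g' a b \<Longrightarrow> tgt f = a \<Longrightarrow>
   comp (msub g g') f = msub (comp g f) (comp g' f)"
  by (simp add: hom_def msub_def comp_add_left smul_src smul_tgt comp_smul_left)

lemma comp_msub_right: "hom f a b \<Longrightarrow> hom f' a b \<Longrightarrow> src g = b \<Longrightarrow>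
   comp g (msub f f') = msub (comp g f) (comp g f')"
  by (simp add: hom_def msub_def comp_add_right smul_src smul_tgt comp_smul_right)

lemma tens_msub_left: "hom g a b \<Longrightarrow> hom g' a b \<Longrightarrow>
   tens (msub g g') f = msub (tens g f) (tens g' f)"
  by (simp add: hom_def msub_def tens_add_left smul_src smul_tgt tens_smul_left)

lemma tens_msub_right: "hom g a b \<Longrightarrow> hom g' a b \<Longrightarrow>
   tens f (msub g g') = msub (tens f g) (tens f g')"
  by (simp add: hom_def msub_def tens_add_right smul_src smul_tgt tens_smul_right)

lemma msub_self: "msub f f = zer (src f) (tgt f)"
  by (simp add: msub_def add_neg)

lemma msub_zer: "hom f a b \<Longrightarrow> msub f (zer a b) = f"
  using add_zero[of f] by (simp add: hom_def msub_def smul_zer)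

lemma msub_msub_swap:
  assumes "hom a m n" "hom b m n" "hom c m n" "hom d m n"
  shows "msub (msub a b) (msub c d) = msub (msub a c) (msub b d)"
proof -
  have neg: "smul (-1) (msub x y) = add (smul (-1) x) y" if "hom x m n" "hom y m n" for x y
    using that by (simp add: msub_def hom_def smul_add smul_src smul_tgt smul_smul smul_one)
  define b' where "b' = smul (-1) b"
  define c' where "c' = smul (-1) c"
  have hs: "hom b' m n" "hom c' m n" using assms by (simp_all add: b'_def c'_def hom_def smul_src smul_tgt)
  have L: "msub (msub a b) (msub c d) = add (add a b') (add c' d)"
    using assms neg[of c d] by (simp add: msub_def b'_def c'_def)
  have R: "msub (msub a c) (msub b d) = add (add a c') (add b' d)"
    using assms neg[of b d] by (simp add: msub_def b'_def c'_def)
  note H = assms hs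
  have "add (add a b') (add c' d) = add a (add b' (add c' d))"
    using H by (simp add: hom_def add_assoc add_src add_tgt)
  also have "add b' (add c' d) = add (add b' c') d"
    using H by (simp add: hom_def add_assoc add_src add_tgt)
  also have "add b' c' = add c' b'" using H by (simp add: hom_def add_comm)
  also have "add (add c' b') d = add c' (add b' d)"
    using H by (simp add: hom_def add_assoc add_src add_tgt)
  also have "add a (add c' (add b' d)) = add (add a c') (add b' d)"
    using H by (simp add: hom_def add_assoc add_src add_tgt)
  finally show ?thesis using L R by simp
qed

lemma msub_msub_comm:
  assumes "hom a m n" "hom b m n" "hom c m n"
  shows "msub (msub a b) c = msub (msub a c) b"
proof -
  have z: "hom (zer m n) m n" by (simp add: hom_def zer_src zer_tgt)
  have "msub (msub a b) c = msub (msub a b) (msub c (zer m n))" using assms msub_zer by simp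
  also have "\<dots> = msub (msub a c) (msub b (zer m n))" using assms z by (rule msub_msub_swap)
  finally show ?thesis using assms msub_zer by simp
qed

end



context tl0_category
begin

definition homs :: "'m list \<Rightarrow> nat \<Rightarrow> nat \<Rightarrow> bool" where
  "homs fs m n \<longleftrightarrow> (\<forall>f\<in>set fs. hom f m n)"

lemma hsum_Nil: "hsum m n [] = zer m n" by (simp add: hsum_def)
lemma hsum_Cons: "hsum m n (f # fs) = add f (hsum m n fs)" by (simp add: hsum_def)

lemma hsum_hom: "homs fs m n \<Longrightarrow> hom (hsum m n fs) m n"
  by (induction fs) (auto simp: homs_def hom_def hsum_Nil hsum_Cons zer_src zer_tgt add_src add_tgt)

lemma hsum_append: "homs xs m n \<Longrightarrow> homs ys m n \<Longrightarrow> hsum m n (xs @ ys) = add (hsum m n xs) (hsum m n ys)"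
proof (induction xs)
  case Nil
  then show ?case using hsum_hom[of ys m n] by (simp add: hsum_Nil hom_def add_zer_left)
next
  case (Cons x xs)
  then have h: "hom x m n" "homs xs m n" by (auto simp: homs_def)
  then show ?case using Cons hsum_hom[of xs m n] hsum_hom[of ys m n]
    by (simp add: hsum_Cons hom_def add_assoc)
qed

lemma hsum_remove1: "x \<in> set ys \<Longrightarrow> homs ys m n \<Longrightarrow> hsum m n ys = add x (hsum m n (remove1 x ys))"
proof (induction ys)
  case (Cons y ys)
  show ?case
  proof (cases "x = y")
    case False
    have h: "hom x m n" "hom y m n" "homs ys m n" "homs (remove1 x ys) m n"
      using Cons by (auto simp: homs_def dest: set_remove1_subset[THEN subsetD])
    have "hsum m n (y # ys) = add y (add x (hsum m n (remove1 x ys)))"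
      using Cons False h by (simp add: hsum_Cons)
    also have "\<dots> = add (add y x) (hsum m n (remove1 x ys))"
      using h hsum_hom[of "remove1 x ys" m n] by (simp add: hom_def add_assoc)
    also have "add y x = add x y" using h by (simp add: hom_def add_comm)
    also have "add (add x y) (hsum m n (remove1 x ys)) = add x (add y (hsum m n (remove1 x ys)))"
      using h hsum_hom[of "remove1 x ys" m n] by (simp add: hom_def add_assoc)
    finally show ?thesis using False by (simp add: hsum_Cons)
  qed (simp add: hsum_Cons)
qed simp

lemma hsum_perm: "mset xs = mset ys \<Longrightarrow> homs xs m n \<Longrightarrow> hsum m n xs = hsum m n ys"
proof (induction xs arbitrary: ys)
  case Nil
  then show ?case by (cases ys) auto
next
  case (Cons x xs)
  have xin: "x \<in> set ys" using Cons(2) by (metis list.set_intros(1) set_mset_mset)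
  have sy: "set ys = set (x # xs)" using Cons(2) by (metis set_mset_mset)
  have hy: "homs ys m n" using Cons(3) sy by (simp add: homs_def)
  have "mset xs = mset (remove1 x ys)" using Cons(2) by (metis add_mset_remove_trivial mset.simps(2) mset_remove1)
  then have "hsum m n xs = hsum m n (remove1 x ys)" using Cons by (simp add: homs_def)
  then show ?case using hsum_remove1[OF xin hy] by (simp add: hsum_Cons)
qed

lemma tens_hsum: "homs fs m n \<Longrightarrow> tens g (hsum m n fs) = hsum (src g + m) (tgt g + n) (map (tens g) fs)"
proof (induction fs)
  case Nil
  then show ?case by (simp add: hsum_Nil tens_zer_right)
next
  case (Cons f fs)
  then have h: "hom f m n" "homs fs m n" by (auto simp: homs_def)
  then show ?case using Cons hsum_hom[of fs m n] by (simp add: hsum_Cons tens_add_right hom_def)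
qed

lemma smul_hsum: "homs fs m n \<Longrightarrow> smul c (hsum m n fs) = hsum m n (map (smul c) fs)"
proof (induction fs)
  case Nil
  then show ?case by (simp add: hsum_Nil smul_zer)
next
  case (Cons f fs)
  then have h: "hom f m n" "homs fs m n" by (auto simp: homs_def)
  then show ?case using Cons hsum_hom[of fs m n] by (simp add: hsum_Cons smul_add hom_def)
qed

lemma comp_idl: "tgt f = n \<Longrightarrow> comp (idm n) f = f" using comp_id_left by blast
lemma comp_idr: "src f = n \<Longrightarrow> comp f (idm n) = f" using comp_id_right by blast

lemma capw_src: "src (capw I k r) = r"
  by (induction I k r rule: capw.induct) (auto simp: id_src tens_src cap_src)
lemma cupw_tgt: "tgt (cupw I k r) = r"
  by (induction I k r rule: cupw.induct) (auto simp: id_tgt tens_tgt cup_tgt)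
lemma cupw_capw: "src (cupw I k r) = tgt (capw I k r)"
  by (induction I k r rule: capw.induct) (auto simp: id_tgt id_src tens_tgt tens_src cup_src cap_tgt)

lemma capw_cong: "(\<And>i. k \<le> i \<Longrightarrow> i \<in> I \<longleftrightarrow> i \<in> I') \<Longrightarrow> capw I k r = capw I' k r"
  by (induction I k r rule: capw.induct) auto
lemma cupw_cong: "(\<And>i. k \<le> i \<Longrightarrow> i \<in> I \<longleftrightarrow> i \<in> I') \<Longrightarrow> cupw I k r = cupw I' k r"
  by (induction I k r rule: cupw.induct) auto

definition DD :: "nat set \<Rightarrow> nat \<Rightarrow> nat \<Rightarrow> 'm" where
  "DD I k r = comp (cupw I k r) (capw I k r)"

lemma DD_hom: "hom (DD I k r) r r"
  by (simp add: DD_def hom_def comp_src comp_tgt cupw_capw capw_src cupw_tgt)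

lemma DD_0: "DD I k 0 = idm 0"
  unfolding DD_def capw.simps cupw.simps by (rule comp_idl) (rule id_tgt)
lemma DD_1: "DD I k (Suc 0) = idm 1"
  unfolding DD_def capw.simps cupw.simps by (rule comp_idl) (rule id_tgt)
lemma DD_SS: "DD I k (Suc (Suc r)) =
  (if k \<in> I then tens (comp cup cap) (DD I (k + 2) r) else tens (idm 1) (DD I (Suc k) (Suc r)))"
proof (cases "k \<in> I")
  case True
  have "comp (tens cup (cupw I (k + 2) r)) (tens cap (capw I (k + 2) r))
      = tens (comp cup cap) (comp (cupw I (k + 2) r) (capw I (k + 2) r))"
    by (rule interchange) (simp_all add: cup_src cap_tgt cupw_capw)
  then show ?thesis using True unfolding DD_def by simp
next
  case False
  have "comp (tens (idm 1) (cupw I (Suc k) (Suc r))) (tens (idm 1) (capw I (Suc k) (Suc r)))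
      = tens (comp (idm 1) (idm 1)) (comp (cupw I (Suc k) (Suc r)) (capw I (Suc k) (Suc r)))"
    by (rule interchange) (simp_all add: id_src id_tgt cupw_capw)
  then show ?thesis using False comp_idl[OF id_tgt[of 1]] unfolding DD_def by simp
qed

lemma DD_cong: "(\<And>i. k \<le> i \<Longrightarrow> i \<in> I \<longleftrightarrow> i \<in> I') \<Longrightarrow> DD I k r = DD I' k r"
proof -
  assume h: "\<And>i. k \<le> i \<Longrightarrow> i \<in> I \<longleftrightarrow> i \<in> I'"
  have a: "capw I k r = capw I' k r" by (rule capw_cong) (rule h)
  have b: "cupw I k r = cupw I' k r" by (rule cupw_cong) (rule h)
  show ?thesis unfolding DD_def a b ..
qed

definition SS :: "nat \<Rightarrow> nat \<Rightarrow> 'm" where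
  "SS k r = hsum r r (map (\<lambda>I. smul ((-1) ^ card I) (DD I k r)) (AL k r))"

lemma homs_SSlist: "homs (map (\<lambda>I. smul (c I) (DD I k r)) L) r r"
  using DD_hom by (auto simp: homs_def hom_def smul_src smul_tgt)

lemma SS_hom: "hom (SS k r) r r"
  unfolding SS_def by (rule hsum_hom[OF homs_SSlist])

lemma SS_0: "SS k 0 = idm 0"
  by (simp add: SS_def hsum_Cons hsum_Nil DD_0 smul_one add_zero[of "idm 0", simplified id_src id_tgt])
lemma SS_1: "SS k (Suc 0) = idm 1"
  by (simp add: SS_def hsum_Cons hsum_Nil DD_1 smul_one add_zero[of "idm (Suc 0)", simplified id_src id_tgt])

lemma SS_rec: "SS k (Suc (Suc r)) = msub (tens (idm 1) (SS (Suc k) (Suc r))) (tens (comp cup cap) (SS (k + 2) r))"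
proof -
  let ?U = "comp cup cap"
  let ?F = "\<lambda>r k I. smul ((-1::'k) ^ card I) (DD I k r)"
  have p1: "map (?F (Suc (Suc r)) k) (AL (Suc k) (Suc r)) = map (tens (idm 1)) (map (?F (Suc r) (Suc k)) (AL (Suc k) (Suc r)))"
  proof -
    have "?F (Suc (Suc r)) k I = tens (idm 1) (?F (Suc r) (Suc k) I)" if "I \<in> set (AL (Suc k) (Suc r))" for I
    proof -
      have "k \<notin> I" using that AL_set by auto
      then show ?thesis by (simp add: DD_SS tens_smul_right)
    qed
    then show ?thesis by simp
  qed
  have p2: "map (?F (Suc (Suc r)) k) (map (insert k) (AL (k + 2) r)) = map (smul (-1)) (map (tens ?U) (map (?F r (k + 2)) (AL (k + 2) r)))"
  proof -
    have "?F (Suc (Suc r)) k (insert k J) = smul (-1) (tens ?U (?F r (k + 2) J))" if "J \<in> set (AL (k+2) r)" for J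
    proof -
      have kJ: "k \<notin> J" using that AL_set by auto
      have fJ: "finite J" using that by (rule AL_finite)
      have "DD (insert k J) (k + 2) r = DD J (k + 2) r" by (rule DD_cong) auto
      then show ?thesis using kJ fJ by (simp add: DD_SS tens_smul_right smul_smul)
    qed
    then show ?thesis by simp
  qed
  have hA: "homs (map (tens (idm 1)) (map (?F (Suc r) (Suc k)) (AL (Suc k) (Suc r)))) (Suc (Suc r)) (Suc (Suc r))"
    using DD_hom by (auto simp: homs_def hom_def smul_src smul_tgt tens_src tens_tgt id_src id_tgt)
  have hB0: "homs (map (tens ?U) (map (?F r (k + 2)) (AL (k + 2) r))) (Suc (Suc r)) (Suc (Suc r))"
    using DD_hom by (auto simp: homs_def hom_def smul_src smul_tgt tens_src tens_tgt U_src U_tgt)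
  have hB: "homs (map (smul (-1)) (map (tens ?U) (map (?F r (k + 2)) (AL (k + 2) r)))) (Suc (Suc r)) (Suc (Suc r))"
    using hB0 by (auto simp: homs_def hom_def smul_src smul_tgt)
  have "SS k (Suc (Suc r)) = add (hsum (Suc (Suc r)) (Suc (Suc r)) (map (tens (idm 1)) (map (?F (Suc r) (Suc k)) (AL (Suc k) (Suc r)))))
     (hsum (Suc (Suc r)) (Suc (Suc r)) (map (smul (-1)) (map (tens ?U) (map (?F r (k + 2)) (AL (k + 2) r)))))"
    unfolding SS_def using p1 p2 hA hB by (simp add: hsum_append del: map_map)
  also have "hsum (Suc (Suc r)) (Suc (Suc r)) (map (tens (idm 1)) (map (?F (Suc r) (Suc k)) (AL (Suc k) (Suc r))))
     = tens (idm 1) (SS (Suc k) (Suc r))"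
    unfolding SS_def using tens_hsum[OF homs_SSlist, of "idm 1"] by (simp add: id_src id_tgt del: map_map)
  also have "hsum (Suc (Suc r)) (Suc (Suc r)) (map (smul (-1)) (map (tens ?U) (map (?F r (k + 2)) (AL (k + 2) r))))
     = smul (-1) (tens ?U (SS (k + 2) r))"
    unfolding SS_def using tens_hsum[OF homs_SSlist, of ?U] smul_hsum[OF hB0]
    by (simp add: U_src U_tgt del: map_map)
  finally show ?thesis by (simp add: msub_def)
qed

fun KK :: "nat \<Rightarrow> 'm" where
  "KK 0 = idm 0"
| "KK (Suc 0) = idm 1"
| "KK (Suc (Suc r)) = msub (tens (idm 1) (KK (Suc r))) (tens (comp cup cap) (KK r))"

lemma SS_KK: "SS k r = KK r"
proof (induction r arbitrary: k rule: KK.induct)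
  case 1 show ?case unfolding SS_0 KK.simps ..
next
  case 2 show ?case unfolding SS_1 KK.simps ..
next
  case (3 r)
  have a: "SS (Suc k) (Suc r) = KK (Suc r)" by (rule 3)
  have b: "SS (k + 2) r = KK r" by (rule 3)
  show ?case unfolding SS_rec a b KK.simps ..
qed

lemma jw_KK: "jw n = KK n"
proof -
  let ?F = "\<lambda>I. smul ((-1::'k) ^ card I) (DD I 1 n)"
  have d0: "distinct (map set (subseqs [1..<Suc n]))" by (rule distinct_set_subseqs) simp
  have d1: "distinct (apt_sets n)" unfolding apt_sets_def using d0 by (rule distinct_filter)
  have ps: "set (map set (subseqs [1..<Suc n])) = Pow {1..<Suc n}"
    unfolding set_map subseqs_powset set_upt ..
  have s1: "set (apt_sets n) = set (AL 1 n)"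
  proof (rule set_eqI)
    fix I
    have "I \<in> set (apt_sets n) \<longleftrightarrow> I \<subseteq> {1..<Suc n} \<and> apt n I"
      unfolding apt_sets_def set_filter ps by blast
    also have "\<dots> \<longleftrightarrow> I \<subseteq> {1..<1 + (n - 1)} \<and> (\<forall>i\<in>I. Suc i \<notin> I)"
    proof
      assume h: "I \<subseteq> {1..<Suc n} \<and> apt n I"
      have "I \<subseteq> {1..<1 + (n - 1)}"
      proof
        fix i assume "i \<in> I"
        then have "1 \<le> i" "i \<le> n" "i \<noteq> n" using h unfolding apt_def by auto
        then show "i \<in> {1..<1 + (n - 1)}" by simp
      qed
      then show "I \<subseteq> {1..<1 + (n - 1)} \<and> (\<forall>i\<in>I. Suc i \<notin> I)" using h unfolding apt_def by blast
    next
      assume h: "I \<subseteq> {1..<1 + (n - 1)} \<and> (\<forall>i\<in>I. Suc i \<notin> I)"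
      have "\<forall>i\<in>I. 1 \<le> i \<and> i < n"
      proof
        fix i assume "i \<in> I"
        then have "1 \<le> i" "i < 1 + (n - 1)" using h by auto
        then show "1 \<le> i \<and> i < n" by linarith
      qed
      then show "I \<subseteq> {1..<Suc n} \<and> apt n I" using h unfolding apt_def by auto
    qed
    also have "\<dots> \<longleftrightarrow> I \<in> set (AL 1 n)" unfolding AL_set by simp
    finally show "I \<in> set (apt_sets n) \<longleftrightarrow> I \<in> set (AL 1 n)" .
  qed
  have "mset (apt_sets n) = mset (AL 1 n)"
    using d1 AL_distinct s1 by (simp add: set_eq_iff_mset_eq_distinct)
  then have me: "mset (map ?F (apt_sets n)) = mset (map ?F (AL 1 n))" by simp
  have "jw n = hsum n n (map ?F (apt_sets n))"
    unfolding jw_def DD_def cup_I_def cap_I_def ..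
  also have "\<dots> = hsum n n (map ?F (AL 1 n))" by (rule hsum_perm[OF me homs_SSlist])
  also have "\<dots> = SS 1 n" unfolding SS_def ..
  finally show ?thesis by (simp only: SS_KK)
qed

end



context tl0_category
begin

abbreviation UU where "UU \<equiv> comp cup cap"

lemma KK_hom: "hom (KK r) r r"
  by (induction r rule: KK.induct)
     (simp_all add: hom_def id_src id_tgt msub_src[unfolded hom_def] tens_src tens_tgt U_src U_tgt)

lemma KK_src[simp]: "src (KK r) = r" and KK_tgt[simp]: "tgt (KK r) = r"
  using KK_hom by (simp_all add: hom_def)

lemma tens_U_idm0: "tens UU (idm 0) = tens (idm 0) UU"
  by (simp add: tens_unit_left tens_unit_right)

lemma hom_tens: "hom f a b \<Longrightarrow> hom g c d \<Longrightarrow> hom (tens f g) (a + c) (b + d)"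
  by (simp add: hom_def tens_src tens_tgt)

lemma hom_U: "hom UU 2 2" by (simp add: hom_def U_src U_tgt)
lemma hom_idm: "hom (idm n) n n" by (simp add: hom_def id_src id_tgt)

lemma i2: "tens (idm 1) (idm 1) = idm 2"
proof - have e: "(1::nat) + 1 = 2" by simp show ?thesis using tens_id[of 1 1] unfolding e . qed
lemma i3a: "tens (idm 1) (idm 2) = idm 3"
proof - have e: "(1::nat) + 2 = 3" by simp show ?thesis using tens_id[of 1 2] unfolding e . qed
lemma i3b: "tens (idm 2) (idm 1) = idm 3"
proof - have e: "(2::nat) + 1 = 3" by simp show ?thesis using tens_id[of 2 1] unfolding e . qed

declare KK.simps[simp del]

lemma KK_right: "KK (Suc (Suc r)) = msub (tens (KK (Suc r)) (idm 1)) (tens (KK r) UU)"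
proof (induction r rule: KK.induct)
  case 1
  show ?case unfolding KK.simps tens_unit_left tens_unit_right ..
next
  case 2
  have u0: "tens UU (idm 0) = UU" by (rule tens_unit_right)
  have a: "tens (idm 1) (msub (tens (idm 1) (idm 1)) (tens UU (idm 0))) = msub (idm 3) (tens (idm 1) UU)"
    unfolding i2 u0 tens_msub_right[OF hom_idm hom_U] i3a ..
  have b: "tens (msub (tens (idm 1) (idm 1)) (tens UU (idm 0))) (idm 1) = msub (idm 3) (tens UU (idm 1))"
    unfolding i2 u0 tens_msub_left[OF hom_idm hom_U] i3b ..
  show ?case unfolding KK.simps a b
    by (rule msub_msub_comm[of _ 3 3]) (auto simp: hom_def id_src id_tgt tens_src tens_tgt U_src U_tgt)
next
  case (3 r)
  let ?a = "KK (Suc (Suc r))" and ?b = "KK (Suc r)" and ?c = "KK r"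
  have h1: "hom (tens ?a (idm 1)) (r+3) (r+3)" "hom (tens ?b UU) (r+3) (r+3)"
     "hom (tens ?b (idm 1)) (r+2) (r+2)" "hom (tens ?c UU) (r+2) (r+2)"
     "hom (tens (idm 1) ?a) (r+3) (r+3)" "hom (tens UU ?b) (r+3) (r+3)"
     "hom (tens (idm 1) ?b) (r+2) (r+2)" "hom (tens UU ?c) (r+2) (r+2)"
    by (simp_all add: hom_def tens_src tens_tgt id_src id_tgt U_src U_tgt)
  have e1: "tens (idm 1) (KK (Suc (Suc (Suc r)))) = msub (tens (tens (idm 1) ?a) (idm 1)) (tens (tens (idm 1) ?b) UU)"
    unfolding 3(1) tens_msub_right[OF h1(1) h1(2)] tens_assoc ..
  have e2: "tens UU ?a = msub (tens (tens UU ?b) (idm 1)) (tens (tens UU ?c) UU)"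
    unfolding 3(2) tens_msub_right[OF h1(3) h1(4)] tens_assoc ..
  have sw: "msub (msub (tens (tens (idm 1) ?a) (idm 1)) (tens (tens (idm 1) ?b) UU))
                  (msub (tens (tens UU ?b) (idm 1)) (tens (tens UU ?c) UU))
           = msub (msub (tens (tens (idm 1) ?a) (idm 1)) (tens (tens UU ?b) (idm 1)))
                  (msub (tens (tens (idm 1) ?b) UU) (tens (tens UU ?c) UU))"
    by (rule msub_msub_swap[of _ "r + 4" "r + 4"]) (simp_all add: hom_def id_src id_tgt tens_src tens_tgt U_src U_tgt)
  have f1: "msub (tens (tens (idm 1) ?a) (idm 1)) (tens (tens UU ?b) (idm 1)) = tens (KK (Suc (Suc (Suc r)))) (idm 1)"
    unfolding KK.simps(3)[of "Suc r"] by (rule tens_msub_left[OF h1(5) h1(6), symmetric])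
  have f2: "msub (tens (tens (idm 1) ?b) UU) (tens (tens UU ?c) UU) = tens ?a UU"
    unfolding KK.simps(3)[of r] by (rule tens_msub_left[OF h1(7) h1(8), symmetric])
  have "KK (Suc (Suc (Suc (Suc r)))) = msub (tens (idm 1) (KK (Suc (Suc (Suc r))))) (tens UU ?a)"
    by (rule KK.simps(3))
  also have "\<dots> = msub (msub (tens (tens (idm 1) ?a) (idm 1)) (tens (tens (idm 1) ?b) UU))
                  (msub (tens (tens UU ?b) (idm 1)) (tens (tens UU ?c) UU))" unfolding e1 e2 ..
  also have "\<dots> = msub (msub (tens (tens (idm 1) ?a) (idm 1)) (tens (tens UU ?b) (idm 1)))
                  (msub (tens (tens (idm 1) ?b) UU) (tens (tens UU ?c) UU))" by (rule sw)
  also have "\<dots> = msub (tens (KK (Suc (Suc (Suc r)))) (idm 1)) (tens ?a UU)" unfolding f1 f2 ..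
  finally show ?case .
qed

end



context tl0_category
begin

lemma comp_idn: "comp (idm n) (idm n) = idm n"
  by (rule comp_idl) (rule id_tgt)
lemma comp_idm1: "comp (idm 1) (idm 1) = idm 1" by (rule comp_idn)

lemma Z1: "comp (tens UU (idm 1)) (tens (idm 1) UU) = zer 3 3"
proof -
  let ?A = "tens cup (idm 1)" and ?B = "tens cap (idm 1)" and ?C = "tens (idm 1) cup" and ?D = "tens (idm 1) cap"
  have e1: "tens UU (idm 1) = comp ?A ?B"
    by (subst interchange) (simp_all add: cup_src cap_tgt id_src id_tgt comp_idn)
  have e2: "tens (idm 1) UU = comp ?C ?D"
    by (subst interchange) (simp_all add: cup_src cap_tgt id_src id_tgt comp_idn)
  have s: "src ?A = 1" "tgt ?A = 3" "src ?B = 3" "tgt ?B = 1" "src ?C = 1" "tgt ?C = 3" "src ?D = 3" "tgt ?D = 1"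
    by (simp_all add: tens_src tens_tgt cup_src cup_tgt cap_src cap_tgt id_src id_tgt)
  have "comp (comp ?A ?B) (comp ?C ?D) = comp ?A (comp ?B (comp ?C ?D))"
    using s by (simp add: comp_assoc comp_src comp_tgt)
  also have "comp ?B (comp ?C ?D) = comp (comp ?B ?C) ?D"
    using s by (simp add: comp_assoc comp_src comp_tgt)
  also have "comp ?B ?C = zer 1 1" by (rule zigzag2)
  also have "comp (zer 1 1) ?D = zer 3 1" using s by (simp add: comp_zer_left)
  also have "comp ?A (zer 3 1) = zer 3 3" using s by (simp add: comp_zer_right)
  finally show ?thesis using e1 e2 by simp
qed

lemma Z2: "comp (tens (idm 1) UU) (tens UU (idm 1)) = zer 3 3"
proof -
  let ?A = "tens cup (idm 1)" and ?B = "tens cap (idm 1)" and ?C = "tens (idm 1) cup" and ?D = "tens (idm 1) cap"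
  have e1: "tens UU (idm 1) = comp ?A ?B"
    by (subst interchange) (simp_all add: cup_src cap_tgt id_src id_tgt comp_idn)
  have e2: "tens (idm 1) UU = comp ?C ?D"
    by (subst interchange) (simp_all add: cup_src cap_tgt id_src id_tgt comp_idn)
  have s: "src ?A = 1" "tgt ?A = 3" "src ?B = 3" "tgt ?B = 1" "src ?C = 1" "tgt ?C = 3" "src ?D = 3" "tgt ?D = 1"
    by (simp_all add: tens_src tens_tgt cup_src cup_tgt cap_src cap_tgt id_src id_tgt)
  have "comp (comp ?C ?D) (comp ?A ?B) = comp ?C (comp ?D (comp ?A ?B))"
    using s by (simp add: comp_assoc comp_src comp_tgt)
  also have "comp ?D (comp ?A ?B) = comp (comp ?D ?A) ?B"
    using s by (simp add: comp_assoc comp_src comp_tgt)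
  also have "comp ?D ?A = zer 1 1" by (rule zigzag1)
  also have "comp (zer 1 1) ?B = zer 3 1" using s by (simp add: comp_zer_left)
  also have "comp ?C (zer 3 1) = zer 3 3" using s by (simp add: comp_zer_right)
  finally show ?thesis using e1 e2 by simp
qed


lemma idm_Suc: "idm (Suc m) = tens (idm m) (idm 1)" unfolding Suc_eq_plus1 by (rule tens_id[symmetric])

lemma L_common:
  shows "hom (tens (KK (Suc m')) (idm 1)) (m' + 2) (m' + 2)" "hom (tens (KK m') UU) (m' + 2) (m' + 2)"
    and "src (tens (idm (Suc m')) UU) = m' + 3" "tgt (tens (idm (Suc m')) UU) = m' + 3"
    and "tens (KK (Suc (Suc m'))) (idm 1) = msub (tens (tens (KK (Suc m')) (idm 1)) (idm 1)) (tens (tens (KK m') UU) (idm 1))"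
    and "hom (tens (tens (KK (Suc m')) (idm 1)) (idm 1)) (m' + 3) (m' + 3)"
    and "hom (tens (tens (KK m') UU) (idm 1)) (m' + 3) (m' + 3)"
    and "tens (tens (KK (Suc m')) (idm 1)) (idm 1) = tens (KK (Suc m')) (idm 2)"
    and "tens (tens (KK m') UU) (idm 1) = tens (KK m') (tens UU (idm 1))"
    and "tens (idm (Suc m')) UU = tens (idm m') (tens (idm 1) UU)"
proof -
  show h: "hom (tens (KK (Suc m')) (idm 1)) (m' + 2) (m' + 2)" "hom (tens (KK m') UU) (m' + 2) (m' + 2)"
    by (simp_all add: hom_def tens_src tens_tgt id_src id_tgt U_src U_tgt)
  show "src (tens (idm (Suc m')) UU) = m' + 3" "tgt (tens (idm (Suc m')) UU) = m' + 3"
    by (simp_all add: tens_src tens_tgt id_src id_tgt U_src U_tgt)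
  show "tens (KK (Suc (Suc m'))) (idm 1) = msub (tens (tens (KK (Suc m')) (idm 1)) (idm 1)) (tens (tens (KK m') UU) (idm 1))"
    unfolding KK_right by (rule tens_msub_left[OF h])
  show "hom (tens (tens (KK (Suc m')) (idm 1)) (idm 1)) (m' + 3) (m' + 3)"
    "hom (tens (tens (KK m') UU) (idm 1)) (m' + 3) (m' + 3)"
    by (simp_all add: hom_def tens_src tens_tgt id_src id_tgt U_src U_tgt)
  show "tens (tens (KK (Suc m')) (idm 1)) (idm 1) = tens (KK (Suc m')) (idm 2)"
    unfolding tens_assoc[symmetric] i2 ..
  show "tens (tens (KK m') UU) (idm 1) = tens (KK m') (tens UU (idm 1))" by (rule tens_assoc[symmetric])
  show "tens (idm (Suc m')) UU = tens (idm m') (tens (idm 1) UU)" unfolding idm_Suc tens_assoc ..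
qed

lemma L1: "comp (tens (KK (Suc m)) (idm 1)) (tens (idm m) UU) = tens (KK m) UU"
proof (cases m)
  case 0
  show ?thesis unfolding 0 KK.simps i2 tens_unit_left by (rule comp_idl[OF U_tgt])
next
  case (Suc m')
  note c = L_common[of m']
  have t1: "comp (tens (KK (Suc m')) (idm 2)) (tens (idm (Suc m')) UU) = tens (KK (Suc m')) UU"
  proof -
    have "comp (tens (KK (Suc m')) (idm 2)) (tens (idm (Suc m')) UU) = tens (comp (KK (Suc m')) (idm (Suc m'))) (comp (idm 2) UU)"
      by (rule interchange) (simp_all add: id_src id_tgt U_src U_tgt)
    also have "\<dots> = tens (KK (Suc m')) UU"
      unfolding comp_idl[OF U_tgt] comp_idr[OF KK_src[of "Suc m'"]] ..
    finally show ?thesis .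
  qed
  have t2: "comp (tens (KK m') (tens UU (idm 1))) (tens (idm m') (tens (idm 1) UU)) = zer (m' + 3) (m' + 3)"
  proof -
    have "comp (tens (KK m') (tens UU (idm 1))) (tens (idm m') (tens (idm 1) UU)) = tens (comp (KK m') (idm m')) (comp (tens UU (idm 1)) (tens (idm 1) UU))"
      by (rule interchange) (simp_all add: id_src id_tgt U_src U_tgt tens_src tens_tgt)
    also have "\<dots> = tens (KK m') (zer 3 3)" unfolding Z1 comp_idr[OF KK_src[of m']] ..
    also have "\<dots> = zer (m' + 3) (m' + 3)" unfolding tens_zer_right KK_src KK_tgt ..
    finally show ?thesis .
  qed
  have "comp (tens (KK (Suc (Suc m'))) (idm 1)) (tens (idm (Suc m')) UU)
      = comp (msub (tens (tens (KK (Suc m')) (idm 1)) (idm 1)) (tens (tens (KK m') UU) (idm 1))) (tens (idm (Suc m')) UU)"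
    unfolding c(5) ..
  also have "\<dots> = msub (comp (tens (tens (KK (Suc m')) (idm 1)) (idm 1)) (tens (idm (Suc m')) UU))
                        (comp (tens (tens (KK m') UU) (idm 1)) (tens (idm (Suc m')) UU))"
    by (rule comp_msub_left[OF c(6) c(7)]) (rule c(4))
  also have "\<dots> = msub (tens (KK (Suc m')) UU) (zer (m' + 3) (m' + 3))"
    using t1 t2 unfolding c(8) c(9) c(10) by simp
  also have "\<dots> = tens (KK (Suc m')) UU"
    by (rule msub_zer) (simp add: hom_def tens_src tens_tgt U_src U_tgt)
  finally show ?thesis unfolding Suc .
qed

lemma L2: "comp (tens (idm m) UU) (tens (KK (Suc m)) (idm 1)) = tens (KK m) UU"
proof (cases m)
  case 0
  show ?thesis unfolding 0 KK.simps i2 tens_unit_left by (rule comp_idr[OF U_src])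
next
  case (Suc m')
  note c = L_common[of m']
  have t1: "comp (tens (idm (Suc m')) UU) (tens (KK (Suc m')) (idm 2)) = tens (KK (Suc m')) UU"
  proof -
    have "comp (tens (idm (Suc m')) UU) (tens (KK (Suc m')) (idm 2)) = tens (comp (idm (Suc m')) (KK (Suc m'))) (comp UU (idm 2))"
      by (rule interchange) (simp_all add: id_src id_tgt U_src U_tgt)
    also have "\<dots> = tens (KK (Suc m')) UU"
      unfolding comp_idr[OF U_src] comp_idl[OF KK_tgt[of "Suc m'"]] ..
    finally show ?thesis .
  qed
  have t2: "comp (tens (idm m') (tens (idm 1) UU)) (tens (KK m') (tens UU (idm 1))) = zer (m' + 3) (m' + 3)"
  proof -
    have "comp (tens (idm m') (tens (idm 1) UU)) (tens (KK m') (tens UU (idm 1))) = tens (comp (idm m') (KK m')) (comp (tens (idm 1) UU) (tens UU (idm 1)))"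
      by (rule interchange) (simp_all add: id_src id_tgt U_src U_tgt tens_src tens_tgt)
    also have "\<dots> = tens (KK m') (zer 3 3)" unfolding Z2 comp_idl[OF KK_tgt[of m']] ..
    also have "\<dots> = zer (m' + 3) (m' + 3)" unfolding tens_zer_right KK_src KK_tgt ..
    finally show ?thesis .
  qed
  have "comp (tens (idm (Suc m')) UU) (tens (KK (Suc (Suc m'))) (idm 1))
      = comp (tens (idm (Suc m')) UU) (msub (tens (tens (KK (Suc m')) (idm 1)) (idm 1)) (tens (tens (KK m') UU) (idm 1)))"
    unfolding c(5) ..
  also have "\<dots> = msub (comp (tens (idm (Suc m')) UU) (tens (tens (KK (Suc m')) (idm 1)) (idm 1)))
                        (comp (tens (idm (Suc m')) UU) (tens (tens (KK m') UU) (idm 1)))"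
    by (rule comp_msub_right[OF c(6) c(7)]) (rule c(3))
  also have "\<dots> = msub (tens (KK (Suc m')) UU) (zer (m' + 3) (m' + 3))"
    using t1 t2 unfolding c(8) c(9) c(10) by simp
  also have "\<dots> = tens (KK (Suc m')) UU"
    by (rule msub_zer) (simp add: hom_def tens_src tens_tgt U_src U_tgt)
  finally show ?thesis unfolding Suc .
qed

lemma UU_idem: "comp UU UU = UU"
proof -
  have "comp UU UU = comp cup (comp cap (comp cup cap))"
    by (simp add: comp_assoc comp_src comp_tgt cup_src cup_tgt cap_src cap_tgt)
  also have "comp cap (comp cup cap) = comp (comp cap cup) cap"
    by (simp add: comp_assoc comp_src comp_tgt cup_src cup_tgt cap_src cap_tgt)
  also have "\<dots> = cap" by (simp add: circle comp_idl cap_tgt)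
  finally show ?thesis .
qed

lemma KU_split1: "tens (KK m) UU = comp (tens (idm m) UU) (tens (KK m) (idm 2))"
proof -
  have "comp (tens (idm m) UU) (tens (KK m) (idm 2)) = tens (comp (idm m) (KK m)) (comp UU (idm 2))"
    by (rule interchange) (simp_all add: id_src id_tgt U_src U_tgt)
  also have "\<dots> = tens (KK m) UU" by (simp add: comp_idl comp_idr U_src)
  finally show ?thesis by simp
qed
lemma KU_split2: "tens (KK m) UU = comp (tens (KK m) (idm 2)) (tens (idm m) UU)"
proof -
  have "comp (tens (KK m) (idm 2)) (tens (idm m) UU) = tens (comp (KK m) (idm m)) (comp (idm 2) UU)"
    by (rule interchange) (simp_all add: id_src id_tgt U_src U_tgt)
  also have "\<dots> = tens (KK m) UU" by (simp add: comp_idl comp_idr U_tgt)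
  finally show ?thesis by simp
qed

lemma KK_idem: "comp (KK m) (KK m) = KK m"
proof (induction m rule: KK.induct)
  case 1 show ?case unfolding KK.simps by (rule comp_idn)
next
  case 2 show ?case unfolding KK.simps by (rule comp_idn)
next
  case (3 r)
  let ?A = "tens (KK (Suc r)) (idm 1)" and ?B = "tens (KK r) UU"
  have hA: "hom ?A (r + 2) (r + 2)" and hB: "hom ?B (r + 2) (r + 2)"
    by (simp_all add: hom_def tens_src tens_tgt id_src id_tgt U_src U_tgt)
  have AA: "comp ?A ?A = ?A" using 3 by (simp add: interchange id_src id_tgt comp_idn)
  have BB: "comp ?B ?B = ?B" using 3 by (simp add: interchange U_src U_tgt UU_idem)
  have sA: "src ?A = r + 2" "tgt ?A = r + 2" and sB: "src ?B = r + 2" "tgt ?B = r + 2"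
    using hA hB by (simp_all add: hom_def)
  have sU: "src (tens (idm r) UU) = r + 2" "tgt (tens (idm r) UU) = r + 2"
    "src (tens (KK r) (idm 2)) = r + 2" "tgt (tens (KK r) (idm 2)) = r + 2"
    by (simp_all add: tens_src tens_tgt id_src id_tgt U_src U_tgt)
  have AB: "comp ?A ?B = ?B"
  proof -
    have "comp ?A ?B = comp ?A (comp (tens (idm r) UU) (tens (KK r) (idm 2)))"
      using KU_split1 by (rule arg_cong)
    also have "\<dots> = comp (comp ?A (tens (idm r) UU)) (tens (KK r) (idm 2))"
      by (rule comp_assoc) (simp_all only: sA sU)
    also have "\<dots> = comp ?B (tens (KK r) (idm 2))" unfolding L1 ..
    also have "\<dots> = tens (comp (KK r) (KK r)) (comp UU (idm 2))"
      by (rule interchange) (simp_all add: id_tgt U_src)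
    also have "\<dots> = ?B" unfolding 3(2) using comp_idr[OF U_src] by simp
    finally show ?thesis .
  qed
  have BA: "comp ?B ?A = ?B"
  proof -
    have "comp ?B ?A = comp (comp (tens (KK r) (idm 2)) (tens (idm r) UU)) ?A"
      using KU_split2 by (rule arg_cong)
    also have "\<dots> = comp (tens (KK r) (idm 2)) (comp (tens (idm r) UU) ?A)"
      by (rule comp_assoc[symmetric]) (simp_all only: sA sU)
    also have "\<dots> = comp (tens (KK r) (idm 2)) ?B" unfolding L2 ..
    also have "\<dots> = tens (comp (KK r) (KK r)) (comp (idm 2) UU)"
      by (rule interchange) (simp_all add: id_src U_tgt)
    also have "\<dots> = ?B" unfolding 3(2) using comp_idl[OF U_tgt] by simp
    finally show ?thesis .
  qed
  have m: "hom (msub ?A ?B) (r + 2) (r + 2)" by (rule msub_src[OF hA hB])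
  have "comp (KK (Suc (Suc r))) (KK (Suc (Suc r))) = comp (msub ?A ?B) (msub ?A ?B)" unfolding KK_right ..
  also have "\<dots> = msub (comp ?A (msub ?A ?B)) (comp ?B (msub ?A ?B))"
    using hA hB by (rule comp_msub_left) (use m in \<open>simp add: hom_def\<close>)
  also have "comp ?A (msub ?A ?B) = msub (comp ?A ?A) (comp ?A ?B)"
    using hA hB by (rule comp_msub_right) (rule sA)
  also have "comp ?B (msub ?A ?B) = msub (comp ?B ?A) (comp ?B ?B)"
    using hA hB by (rule comp_msub_right) (rule sB)
  also have "msub (comp ?B ?A) (comp ?B ?B) = zer (r + 2) (r + 2)"
    unfolding BA BB msub_self sB ..
  also have "msub (msub (comp ?A ?A) (comp ?A ?B)) (zer (r + 2) (r + 2)) = msub (comp ?A ?A) (comp ?A ?B)"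
    unfolding AA AB by (rule msub_zer[OF m])
  also have "\<dots> = KK (Suc (Suc r))" unfolding AA AB KK_right ..
  finally show ?case .
qed

end



theorem mainTheorem7:
  fixes src tgt :: "'m \<Rightarrow> nat" and comp tens add :: "'m \<Rightarrow> 'm \<Rightarrow> 'm"
    and idm :: "nat \<Rightarrow> 'm" and smul :: "'k::field \<Rightarrow> 'm \<Rightarrow> 'm"
    and zer :: "nat \<Rightarrow> nat \<Rightarrow> 'm" and cup cap :: 'm and n :: nat
  assumes TL: "tl0_category src tgt comp tens idm add smul zer cup cap"
    and n: "2 \<le> n"
  shows "tl0_category.jw comp tens idm add smul zer cup cap n =
    tl0_category.msub add smul
      (tens (tl0_category.jw comp tens idm add smul zer cup cap (n - 1)) (idm 1))
      (comp (tens (tl0_category.jw comp tens idm add smul zer cup cap (n - 1)) (idm 1))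
        (comp (tens (idm (n - 2)) cup)
          (comp (tens (idm (n - 2)) cap)
            (tens (tl0_category.jw comp tens idm add smul zer cup cap (n - 1)) (idm 1)))))"
proof -
  interpret tl0_category src tgt comp tens idm add smul zer cup cap by (rule TL)
  obtain m where nm: "n = Suc (Suc m)" using n by (metis add_2_eq_Suc le_Suc_ex)
  let ?A = "tens (KK (Suc m)) (idm 1)"
  have sA: "src ?A = m + 2" "tgt ?A = m + 2" by (simp_all add: tens_src tens_tgt id_src id_tgt)
  have sU: "src (tens (idm m) UU) = m + 2" "tgt (tens (idm m) UU) = m + 2"
    "src (tens (KK m) (idm 2)) = m + 2" "tgt (tens (KK m) (idm 2)) = m + 2"
    "src (tens (idm m) cap) = m + 2" "tgt (tens (idm m) cap) = m"
    "src (tens (idm m) cup) = m" "tgt (tens (idm m) cup) = m + 2"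
    by (simp_all add: tens_src tens_tgt id_src id_tgt U_src U_tgt cup_src cup_tgt cap_src cap_tgt)
  have "comp (tens (idm m) cup) (comp (tens (idm m) cap) ?A) = comp (comp (tens (idm m) cup) (tens (idm m) cap)) ?A"
    by (rule comp_assoc) (simp_all only: sA sU)
  also have "comp (tens (idm m) cup) (tens (idm m) cap) = tens (comp (idm m) (idm m)) UU"
    by (rule interchange) (simp_all add: id_src id_tgt cup_src cap_tgt)
  also have "comp (tens (comp (idm m) (idm m)) UU) ?A = tens (KK m) UU" unfolding comp_idn by (rule L2)
  finally have e1: "comp (tens (idm m) cup) (comp (tens (idm m) cap) ?A) = tens (KK m) UU" .
  have "comp ?A (tens (KK m) UU) = comp ?A (comp (tens (idm m) UU) (tens (KK m) (idm 2)))"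
    using KU_split1 by (rule arg_cong)
  also have "\<dots> = comp (comp ?A (tens (idm m) UU)) (tens (KK m) (idm 2))"
    by (rule comp_assoc) (simp_all only: sA sU)
  also have "\<dots> = comp (tens (KK m) UU) (tens (KK m) (idm 2))" unfolding L1 ..
  also have "\<dots> = tens (comp (KK m) (KK m)) (comp UU (idm 2))"
    by (rule interchange) (simp_all add: id_tgt U_src)
  also have "\<dots> = tens (KK m) UU" unfolding KK_idem comp_idr[OF U_src] ..
  finally have e2: "comp ?A (tens (KK m) UU) = tens (KK m) UU" .
  have n1: "n - 1 = Suc m" and n2: "n - 2 = m" using nm by simp_all
  show ?thesis unfolding n1 n2 jw_KK unfolding nm e1 e2 by (rule KK_right)
qed


end
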